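(* Let $T>0$ and $u\in\mathcal{VT}_1^+(T)$. Then: (1) $\lim_{|\mathbf{x}|\to\infty}u(\mathbf{x})=0$ and there is $\mathbf{z}_0\in\mathbb{R}^N$ such that for all $\mathbf{x}$, $0<u(\mathbf{z}_0)e^{-|\mathbf{x}-\mathbf{z}_0|^2/(4T)}\le u(\mathbf{x})\le u(\mathbf{z}_0)\le(4\pi T)^{-N/2}$; (2) $\lim_{|\mathbf{x}|\to\infty}|\nabla u(\mathbf{x})|=0$ and for all $\mathbf{x}$, $|\nabla u(\mathbf{x})|^2\le\frac{4\pi}{e}(4\pi T)^{-\frac{N+2}{2}}u(\mathbf{x})\le\frac{4\pi}{e}(4\pi T)^{-N-1}$; (3) $|\nabla^2u|\in L^1(\mathbb{R}^N)$ and there is $C_1=C_1(N)>0$ with $\int_{\mathbb{R}^N}|\nabla^2u|\,d\mathcal{L}^N\le C_1T^{-1}$.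
   Context: For positive $U\in C^2(\mathbb{R}^N)$, $\tau(U)=\sup\{\tau\ge0:2\tau\nabla^2\log U+g_{\mathbb{R}}\ge0\}$ (inequality of symmetric matrices); $\mathcal{VT}_1^+(T)=\{u\in C^2\cap L^1(\mathbb{R}^N):u>0,\tau(u)\ge T,\int_{\mathbb{R}^N}u\,d\mathcal{L}^N=1\}$. *)

theory Defs
  imports "HOL-Analysis.Analysis"
begin

definition grad :: "(real^'n \<Rightarrow> real) \<Rightarrow> real^'n \<Rightarrow> real^'n" where
  "grad f x = (\<chi> i. frechet_derivative f (at x) (axis i 1))"

definition hess :: "(real^'n \<Rightarrow> real) \<Rightarrow> real^'n \<Rightarrow> real^'n^'n" where
  "hess f x = (\<chi> i j. frechet_derivative (\<lambda>y. grad f y $ i) (at x) (axis j 1))"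

definition C2 :: "(real^'n \<Rightarrow> real) \<Rightarrow> bool" where
  "C2 f \<longleftrightarrow> (\<forall>x. f differentiable (at x)) \<and> (\<forall>x. grad f differentiable (at x))
            \<and> continuous_on UNIV (hess f)"

definition psd :: "real^'n^'n \<Rightarrow> bool" where
  "psd A \<longleftrightarrow> (\<forall>v. 0 \<le> v \<bullet> (A *v v))"

definition tau :: "(real^'n \<Rightarrow> real) \<Rightarrow> ereal" where
  "tau U = Sup (ereal ` {t. t \<ge> 0 \<and>
      (\<forall>x. psd ((2 * t) *\<^sub>R hess (\<lambda>y. ln (U y)) x + mat 1))})"

definition VT1plus :: "real \<Rightarrow> (real^'n \<Rightarrow> real) set" where
  "VT1plus T = {u. C2 u \<and> integrable lborel u \<and> (\<forall>x. u x > 0) \<and> tau u \<ge> ereal T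
                  \<and> integral\<^sup>L lborel u = 1}"

end

theory Submission
  imports Defs "HOL-Probability.Probability" "HOL-Real_Asymp.Real_Asymp"
begin
lemma linear_inner_grad:
  fixes D :: "real^'n \<Rightarrow> real"
  assumes "linear D"
  shows "D h = (\<chi> i. D (axis i 1)) \<bullet> h"
proof -
  have "D h = D (\<Sum>i\<in>UNIV. h$i *\<^sub>R axis i 1)"
    using basis_expansion[of h] by (simp add: scalar_mult_eq_scaleR)
  also have "\<dots> = (\<Sum>i\<in>UNIV. h$i * D (axis i 1))"
    using assms by (simp add: linear_sum linear_scale)
  also have "\<dots> = (\<chi> i. D (axis i 1)) \<bullet> h"
    by (simp add: inner_vec_def mult.commute)
  finally show ?thesis .
qed

lemma grad_deriv:
  fixes g :: "real^'n \<Rightarrow> real"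
  assumes "g differentiable (at y)"
  shows "(g has_derivative (\<lambda>h. grad g y \<bullet> h)) (at y)"
proof -
  have d: "(g has_derivative frechet_derivative g (at y)) (at y)"
    using assms frechet_derivative_works by blast
  then have "linear (frechet_derivative g (at y))"
    using has_derivative_linear by blast
  then have "frechet_derivative g (at y) = (\<lambda>h. grad g y \<bullet> h)"
    unfolding grad_def using linear_inner_grad by blast
  with d show ?thesis by simp
qed

lemma grad_comp_eq_hess_row: "grad (\<lambda>y. grad g y $ i) y = hess g y $ i"
  by (simp add: grad_def hess_def vec_eq_iff)

lemma line_deriv1:
  fixes g :: "real^'n \<Rightarrow> real"
  assumes "g differentiable (at (x + t *\<^sub>R v))"
  shows "((\<lambda>t. g (x + t *\<^sub>R v)) has_real_derivative (grad g (x + t *\<^sub>R v) \<bullet> v)) (at t)"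
proof -
  have l: "((\<lambda>t. x + t *\<^sub>R v) has_derivative (\<lambda>h. h *\<^sub>R v)) (at t)"
    by (auto intro!: derivative_eq_intros)
  have "((\<lambda>t. g (x + t *\<^sub>R v)) has_derivative (\<lambda>h. grad g (x + t *\<^sub>R v) \<bullet> (h *\<^sub>R v))) (at t)"
    using has_derivative_compose[OF l grad_deriv[OF assms]] by (simp add: o_def)
  then show ?thesis
    by (simp add: has_field_derivative_def mult.commute[of _ "grad g (x + t *\<^sub>R v) \<bullet> v"])
qed

lemma line_deriv2:
  fixes g :: "real^'n \<Rightarrow> real"
  assumes "grad g differentiable (at (x + t *\<^sub>R v))"
  shows "((\<lambda>t. grad g (x + t *\<^sub>R v) \<bullet> v) has_real_derivative (v \<bullet> (hess g (x + t *\<^sub>R v) *v v))) (at t)"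
proof -
  have di: "(\<lambda>y. grad g y $ i) differentiable (at (x + t *\<^sub>R v))" for i
  proof -
    obtain D where "(grad g has_derivative D) (at (x + t *\<^sub>R v))"
      using assms differentiable_def by blast
    from bounded_linear.has_derivative[OF bounded_linear_vec_nth[of i] this] show ?thesis
      using differentiable_def by blast
  qed
  have "((\<lambda>t. \<Sum>i\<in>UNIV. v$i * grad g (x + t *\<^sub>R v) $ i) has_real_derivative
        (\<Sum>i\<in>UNIV. v$i * (hess g (x + t *\<^sub>R v) $ i \<bullet> v))) (at t)"
    apply (intro DERIV_sum DERIV_cmult)
    using line_deriv1[OF di] grad_comp_eq_hess_row by metis
  moreover have "(\<lambda>t. grad g (x + t *\<^sub>R v) \<bullet> v) = (\<lambda>t. \<Sum>i\<in>UNIV. v$i * grad g (x + t *\<^sub>R v) $ i)"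
    by (simp add: inner_vec_def mult.commute)
  moreover have "v \<bullet> (hess g (x + t *\<^sub>R v) *v v) = (\<Sum>i\<in>UNIV. v$i * (hess g (x + t *\<^sub>R v) $ i \<bullet> v))"
    by (simp add: inner_vec_def matrix_vector_mult_def)
  ultimately show ?thesis by simp
qed

lemma delta_hess:
  fixes g :: "real^'n \<Rightarrow> real"
  assumes d: "\<And>y. g differentiable (at y)" and d2: "\<And>y. grad g differentiable (at y)"
    and h: "h > 0"
  shows "\<exists>\<xi>. norm (\<xi> - x) \<le> 2 * h \<and>
    g (x + h *\<^sub>R axis j 1 + h *\<^sub>R axis i 1) - g (x + h *\<^sub>R axis i 1) - g (x + h *\<^sub>R axis j 1) + g x
      = h\<^sup>2 * hess g \<xi> $ i $ j"
proof -
  define ei where "ei = (axis i 1 :: real^'n)"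
  define ej where "ej = (axis j 1 :: real^'n)"
  define \<psi> where "\<psi> s = g ((x + h *\<^sub>R ej) + s *\<^sub>R ei) - g (x + s *\<^sub>R ei)" for s
  define \<psi>' where "\<psi>' s = grad g ((x + h *\<^sub>R ej) + s *\<^sub>R ei) \<bullet> ei - grad g (x + s *\<^sub>R ei) \<bullet> ei" for s
  have "DERIV \<psi> s :> \<psi>' s" for s
    unfolding \<psi>_def \<psi>'_def by (intro DERIV_diff line_deriv1 d)
  then obtain s1 where s1: "0 < s1" "s1 < h"
    "\<psi> h - \<psi> 0 = (h - 0) * (grad g ((x + h *\<^sub>R ej) + s1 *\<^sub>R ei) \<bullet> ei - grad g (x + s1 *\<^sub>R ei) \<bullet> ei)"
    using MVT2[OF h, of \<psi> \<psi>'] unfolding \<psi>'_def by blast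
  define f where "f y = grad g y $ i" for y
  have fd: "f differentiable (at y)" for y
  proof -
    obtain D where "(grad g has_derivative D) (at y)"
      using d2 differentiable_def by blast
    from bounded_linear.has_derivative[OF bounded_linear_vec_nth[of i] this] show ?thesis
      unfolding differentiable_def f_def[abs_def] by blast
  qed
  define \<kappa> where "\<kappa> t = f ((x + s1 *\<^sub>R ei) + t *\<^sub>R ej)" for t
  define \<kappa>' where "\<kappa>' t = grad f ((x + s1 *\<^sub>R ei) + t *\<^sub>R ej) \<bullet> ej" for t
  have "DERIV \<kappa> t :> \<kappa>' t" for t
    unfolding \<kappa>_def \<kappa>'_def by (intro line_deriv1 fd)
  then obtain t1 where t1: "0 < t1" "t1 < h"
    "\<kappa> h - \<kappa> 0 = (h - 0) * (grad f ((x + s1 *\<^sub>R ei) + t1 *\<^sub>R ej) \<bullet> ej)"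
    using MVT2[OF h, of \<kappa> \<kappa>'] unfolding \<kappa>'_def by blast
  define \<xi> where "\<xi> = (x + s1 *\<^sub>R ei) + t1 *\<^sub>R ej"
  have gf: "grad f \<xi> \<bullet> ej = hess g \<xi> $ i $ j"
    unfolding f_def ej_def grad_comp_eq_hess_row by (simp add: inner_axis)
  have "grad g ((x + h *\<^sub>R ej) + s1 *\<^sub>R ei) \<bullet> ei - grad g (x + s1 *\<^sub>R ei) \<bullet> ei = \<kappa> h - \<kappa> 0"
    unfolding \<kappa>_def f_def ei_def by (simp add: inner_axis algebra_simps)
  then have eq: "\<psi> h - \<psi> 0 = h\<^sup>2 * hess g \<xi> $ i $ j"
    using s1(3) t1(3) gf unfolding \<xi>_def by (simp add: power2_eq_square)
  have "norm (\<xi> - x) \<le> norm (s1 *\<^sub>R ei) + norm (t1 *\<^sub>R ej)"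
    unfolding \<xi>_def by (metis add_diff_cancel_left' add.assoc norm_triangle_ineq)
  also have "\<dots> \<le> 2 * h" using s1 t1 by (simp add: ei_def ej_def)
  finally have "norm (\<xi> - x) \<le> 2 * h" .
  moreover have "\<psi> h - \<psi> 0 = g (x + h *\<^sub>R axis j 1 + h *\<^sub>R axis i 1) - g (x + h *\<^sub>R axis i 1) - g (x + h *\<^sub>R axis j 1) + g x"
    unfolding \<psi>_def ei_def ej_def by (simp add: algebra_simps)
  ultimately show ?thesis using eq by metis
qed

lemma hess_sym:
  fixes g :: "real^'n \<Rightarrow> real"
  assumes d: "\<And>y. g differentiable (at y)" and d2: "\<And>y. grad g differentiable (at y)"
    and c: "continuous_on UNIV (hess g)"
  shows "hess g x $ i $ j = hess g x $ j $ i"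
proof -
  define hn where "hn n = inverse (real (Suc n))" for n
  have hpos: "hn n > 0" for n by (simp add: hn_def)
  have "\<forall>n. \<exists>\<xi>. norm (\<xi> - x) \<le> 2 * hn n \<and>
    g (x + hn n *\<^sub>R axis j 1 + hn n *\<^sub>R axis i 1) - g (x + hn n *\<^sub>R axis i 1) - g (x + hn n *\<^sub>R axis j 1) + g x
      = (hn n)\<^sup>2 * hess g \<xi> $ i $ j"
    using delta_hess[OF d d2 hpos] by blast
  then obtain \<xi> where \<xi>: "\<And>n. norm (\<xi> n - x) \<le> 2 * hn n"
    "\<And>n. g (x + hn n *\<^sub>R axis j 1 + hn n *\<^sub>R axis i 1) - g (x + hn n *\<^sub>R axis i 1) - g (x + hn n *\<^sub>R axis j 1) + g x
      = (hn n)\<^sup>2 * hess g (\<xi> n) $ i $ j"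
    by metis
  have "\<forall>n. \<exists>\<xi>. norm (\<xi> - x) \<le> 2 * hn n \<and>
    g (x + hn n *\<^sub>R axis i 1 + hn n *\<^sub>R axis j 1) - g (x + hn n *\<^sub>R axis j 1) - g (x + hn n *\<^sub>R axis i 1) + g x
      = (hn n)\<^sup>2 * hess g \<xi> $ j $ i"
    using delta_hess[OF d d2 hpos] by blast
  then obtain \<zeta> where \<zeta>: "\<And>n. norm (\<zeta> n - x) \<le> 2 * hn n"
    "\<And>n. g (x + hn n *\<^sub>R axis i 1 + hn n *\<^sub>R axis j 1) - g (x + hn n *\<^sub>R axis j 1) - g (x + hn n *\<^sub>R axis i 1) + g x
      = (hn n)\<^sup>2 * hess g (\<zeta> n) $ j $ i"
    by metis
  have eqn: "hess g (\<xi> n) $ i $ j = hess g (\<zeta> n) $ j $ i" for n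
  proof -
    have "(hn n)\<^sup>2 * hess g (\<xi> n) $ i $ j = (hn n)\<^sup>2 * hess g (\<zeta> n) $ j $ i"
      using \<xi>(2)[of n] \<zeta>(2)[of n] by (simp add: algebra_simps)
    then show ?thesis using hpos[of n] by simp
  qed
  have h0: "hn \<longlonglongrightarrow> 0" unfolding hn_def by (rule LIMSEQ_inverse_real_of_nat)
  have h20: "(\<lambda>n. 2 * hn n) \<longlonglongrightarrow> 0" using tendsto_mult_right_zero[OF h0, of 2] by simp
  have "(\<lambda>n. \<xi> n - x) \<longlonglongrightarrow> 0"
    by (rule Lim_null_comparison[OF _ h20]) (use \<xi>(1) in auto)
  then have xl: "\<xi> \<longlonglongrightarrow> x" by (simp add: LIM_zero_iff)
  have "(\<lambda>n. \<zeta> n - x) \<longlonglongrightarrow> 0"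
    by (rule Lim_null_comparison[OF _ h20]) (use \<zeta>(1) in auto)
  then have zl: "\<zeta> \<longlonglongrightarrow> x" by (simp add: LIM_zero_iff)
  have ch: "isCont (hess g) x" using c by (simp add: continuous_on_eq_continuous_at)
  have l1: "(\<lambda>n. hess g (\<xi> n) $ i $ j) \<longlonglongrightarrow> hess g x $ i $ j"
    by (intro tendsto_vec_nth isCont_tendsto_compose[OF ch xl])
  have l2: "(\<lambda>n. hess g (\<zeta> n) $ j $ i) \<longlonglongrightarrow> hess g x $ j $ i"
    by (intro tendsto_vec_nth isCont_tendsto_compose[OF ch zl])
  show ?thesis using LIMSEQ_unique[OF l1] l2 eqn by simp
qed

lemma taylor2:
  fixes g :: "real^'n \<Rightarrow> real"
  assumes d: "\<And>y. g differentiable (at y)" and d2: "\<And>y. grad g differentiable (at y)"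
  shows "\<exists>t. 0 < t \<and> t < 1 \<and> g (x + v) = g x + grad g x \<bullet> v + (v \<bullet> (hess g (x + t *\<^sub>R v) *v v)) / 2"
proof -
  define df where "df m = (if m = 0 then (\<lambda>t. g (x + t *\<^sub>R v)) else if m = 1 then (\<lambda>t. grad g (x + t *\<^sub>R v) \<bullet> v)
     else (\<lambda>t. v \<bullet> (hess g (x + t *\<^sub>R v) *v v)))" for m :: nat
  have D: "\<forall>m t. m < 2 \<and> 0 \<le> t \<and> t \<le> 1 \<longrightarrow> DERIV (df m) t :> df (Suc m) t"
  proof (intro allI impI)
    fix m :: nat and t :: real assume "m < 2 \<and> 0 \<le> t \<and> t \<le> 1"
    then have "m = 0 \<or> m = 1" by auto
    then show "DERIV (df m) t :> df (Suc m) t"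
      by (auto simp: df_def intro: line_deriv1[OF d] line_deriv2[OF d2])
  qed
  from Taylor[of 2 df "\<lambda>t. g (x + t *\<^sub>R v)" 0 1 0 1, OF _ _ D]
  obtain t where "0 < t" "t < 1"
    "g (x + 1 *\<^sub>R v) = (\<Sum>m<2. df m 0 / fact m * (1 - 0) ^ m) + df 2 t / fact 2 * (1 - 0) ^ 2"
    by (auto simp: df_def)
  then show ?thesis
    by (intro exI[of _ t]) (simp add: df_def numeral_2_eq_2)
qed

locale vt =
  fixes T :: real and u :: "real^'n \<Rightarrow> real"
  assumes Tpos: "T > 0" and uin: "u \<in> VT1plus T"
begin

lemma u_pos: "u x > 0" using uin by (simp add: VT1plus_def)
lemma u_diff: "u differentiable (at x)" using uin by (simp add: VT1plus_def C2_def)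
lemma gu_diff: "grad u differentiable (at x)" using uin by (simp add: VT1plus_def C2_def)
lemma hu_cont: "continuous_on UNIV (hess u)" using uin by (simp add: VT1plus_def C2_def)
lemma u_int: "integrable lborel u" using uin by (simp add: VT1plus_def)
lemma u_int1: "integral\<^sup>L lborel u = 1" using uin by (simp add: VT1plus_def)
lemma tau_ge: "tau u \<ge> ereal T" using uin by (simp add: VT1plus_def)

definition L where "L y = ln (u y)"

lemma L_deriv: "(L has_derivative (\<lambda>h. (1 / u y) * (grad u y \<bullet> h))) (at y)"
proof -
  have "((\<lambda>y. ln (u y)) has_derivative (\<lambda>h. inverse (u y) * (grad u y \<bullet> h))) (at y)"
    using grad_deriv[OF u_diff, of y] u_pos[of y]
    by (auto intro!: derivative_eq_intros)
  then show ?thesis unfolding L_def[abs_def] by (simp add: divide_inverse)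
qed

lemma L_diff: "L differentiable (at y)"
  using L_deriv differentiable_def by blast

lemma grad_L: "grad L y = (1 / u y) *\<^sub>R grad u y"
proof -
  have "frechet_derivative L (at y) = (\<lambda>h. (1 / u y) * (grad u y \<bullet> h))"
    using L_deriv frechet_derivative_at by metis
  then show ?thesis by (simp add: grad_def vec_eq_iff inner_axis)
qed

lemma gL_diff: "grad L differentiable (at y)"
proof -
  have "(\<lambda>y. inverse (u y) *\<^sub>R grad u y) differentiable (at y)"
    using u_diff gu_diff u_pos[of y] by (intro differentiable_scaleR differentiable_inverse) auto
  moreover have "grad L = (\<lambda>y. inverse (u y) *\<^sub>R grad u y)"
    by (simp add: fun_eq_iff grad_L divide_inverse)
  ultimately show ?thesis by simp
qed

lemma semi: "2 * T * (v \<bullet> (hess L x *v v)) + v \<bullet> v \<ge> 0"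
proof -
  define S where "S = {t. t \<ge> 0 \<and> (\<forall>x. psd ((2 * t) *\<^sub>R hess (\<lambda>y. ln (u y)) x + mat 1))}"
  have Lf: "(\<lambda>y. ln (u y)) = L" by (simp add: L_def[abs_def])
  have key: "2 * t * (v \<bullet> (hess L x *v v)) + v \<bullet> v \<ge> 0" if "t \<in> S" for t
  proof -
    have "psd ((2 * t) *\<^sub>R hess L x + mat 1)" using that unfolding S_def Lf by auto
    then have "0 \<le> v \<bullet> (((2 * t) *\<^sub>R hess L x + mat 1) *v v)" unfolding psd_def by blast
    also have "((2 * t) *\<^sub>R hess L x + mat 1) *v v = (2 * t) *\<^sub>R (hess L x *v v) + v"
      by (simp add: matrix_vector_mult_add_rdistrib scaleR_matrix_vector_assoc)
    finally show ?thesis by (simp add: inner_add_right)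
  qed
  show ?thesis
  proof (cases "v \<bullet> (hess L x *v v) \<ge> 0")
    case True then show ?thesis using Tpos by (simp add: inner_ge_zero)
  next
    case False
    define a where "a = v \<bullet> (hess L x *v v)"
    have a: "a < 0" using False a_def by simp
    have "t \<le> (v \<bullet> v) / (- 2 * a)" if "t \<in> S" for t
      using key[OF that] a unfolding a_def[symmetric] by (simp add: field_simps)
    then have "Sup (ereal ` S) \<le> ereal ((v \<bullet> v) / (- 2 * a))"
      by (intro Sup_least) auto
    moreover have "tau u = Sup (ereal ` S)" unfolding tau_def S_def by simp
    ultimately have "T \<le> (v \<bullet> v) / (- 2 * a)" using tau_ge by (metis ereal_less_eq(3) order_trans)
    then show ?thesis using a unfolding a_def[symmetric] by (simp add: field_simps)
  qed
qed

lemma semiB: "L (x + v) \<ge> L x + grad L x \<bullet> v - (v \<bullet> v) / (4 * T)"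
proof -
  obtain t where e: "L (x + v) = L x + grad L x \<bullet> v + (v \<bullet> (hess L (x + t *\<^sub>R v) *v v)) / 2"
    using taylor2[OF L_diff gL_diff] by blast
  have "2 * T * (v \<bullet> (hess L (x + t *\<^sub>R v) *v v)) + v \<bullet> v \<ge> 0" by (rule semi)
  then have "(2 * T * (v \<bullet> (hess L (x + t *\<^sub>R v) *v v)) + v \<bullet> v) / (4 * T) \<ge> 0" using Tpos by simp
  then have "(v \<bullet> (hess L (x + t *\<^sub>R v) *v v)) / 2 + (v \<bullet> v) / (4 * T) \<ge> 0"
    using Tpos by (simp add: add_divide_distrib)
  then show ?thesis using e by linarith
qed

lemma semiU: "u (x + v) \<ge> u x * exp ((1 / u x) * (grad u x \<bullet> v) - (v \<bullet> v) / (4 * T))"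
proof -
  have "exp (L (x + v)) \<ge> exp (L x + grad L x \<bullet> v - (v \<bullet> v) / (4 * T))"
    using semiB by simp
  then show ?thesis
    using u_pos[of x] u_pos[of "x+v"] by (simp add: L_def grad_L exp_add exp_diff)
qed

end

lemma gauss1:
  assumes T: "T > (0::real)"
  shows "(\<integral>\<^sup>+y. ennreal (exp (- y\<^sup>2 / (4 * T))) \<partial>lborel) = ennreal (sqrt (4 * pi * T))"
proof -
  define s where "s = sqrt (2 * T)"
  have s: "s > 0" "s\<^sup>2 = 2 * T" using T by (auto simp: s_def)
  have eq: "exp (- y\<^sup>2 / (4 * T)) = sqrt (4 * pi * T) * normal_density 0 s y" for y
  proof -
    have "sqrt (2 * pi * s\<^sup>2) = sqrt (4 * pi * T)" using s by simp
    moreover have "2 * s\<^sup>2 = 4 * T" using s by simp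
    ultimately show ?thesis using T unfolding normal_density_def by (simp add: field_simps)
  qed
  have "(\<integral>\<^sup>+y. ennreal (exp (- y\<^sup>2 / (4 * T))) \<partial>lborel) =
        (\<integral>\<^sup>+y. ennreal (sqrt (4 * pi * T)) * ennreal (normal_density 0 s y) \<partial>lborel)"
    using T by (intro nn_integral_cong) (unfold eq, rule ennreal_mult, auto)
  also have "\<dots> = ennreal (sqrt (4 * pi * T)) * (\<integral>\<^sup>+y. ennreal (normal_density 0 s y) \<partial>lborel)"
    by (simp add: nn_integral_cmult)
  also have "(\<integral>\<^sup>+y. ennreal (normal_density 0 s y) \<partial>lborel) = 1"
    using integrable_normal_density[OF s(1)] integral_normal_density[OF s(1)]
    by (subst nn_integral_eq_integral) auto
  finally show ?thesis by simp
qed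

lemma gaussN:
  assumes T: "T > (0::real)"
  shows "(\<integral>\<^sup>+v. ennreal (exp (- (v \<bullet> v) / (4 * T))) \<partial>(lborel :: 'a::euclidean_space measure))
     = ennreal ((4 * pi * T) powr (real DIM('a) / 2))"
proof -
  have e: "ennreal (exp (- (v \<bullet> v) / (4 * T))) = (\<Prod>b\<in>Basis. ennreal (exp (- (v \<bullet> b)\<^sup>2 / (4 * T))))" for v :: 'a
  proof -
    have "- (v \<bullet> v) / (4 * T) = (\<Sum>b\<in>Basis. - (v \<bullet> b)\<^sup>2 / (4 * T))"
      by (simp add: euclidean_inner[of v v] power2_eq_square sum_divide_distrib sum_negf)
    then have "exp (- (v \<bullet> v) / (4 * T)) = (\<Prod>b\<in>Basis. exp (- (v \<bullet> b)\<^sup>2 / (4 * T)))"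
      by (simp add: exp_sum)
    then show ?thesis by (simp add: prod_ennreal)
  qed
  have "(\<integral>\<^sup>+v. ennreal (exp (- (v \<bullet> v) / (4 * T))) \<partial>(lborel :: 'a measure))
      = (\<Prod>b\<in>(Basis::'a set). (\<integral>\<^sup>+y. ennreal (exp (- y\<^sup>2 / (4 * T))) \<partial>lborel))"
    unfolding e by (rule nn_integral_lborel_prod) auto
  also have "\<dots> = (\<Prod>b\<in>(Basis::'a set). ennreal (sqrt (4 * pi * T)))" using gauss1[OF T] by simp
  also have "\<dots> = ennreal (sqrt (4 * pi * T) ^ DIM('a))" using T by (subst ennreal_power[symmetric]) auto
  also have "sqrt (4 * pi * T) ^ DIM('a) = (4 * pi * T) powr (real DIM('a) / 2)"
    using T by (simp add: sqrt_def root_powr_inverse powr_realpow[symmetric] powr_powr)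
  finally show ?thesis .
qed

lemma nn_translate:
  fixes f :: "'a::euclidean_space \<Rightarrow> ennreal"
  assumes [measurable]: "f \<in> borel_measurable borel"
  shows "(\<integral>\<^sup>+v. f (c + v) \<partial>lborel) = (\<integral>\<^sup>+v. f v \<partial>lborel)"
proof -
  have "(\<integral>\<^sup>+v. f v \<partial>lborel) = (\<integral>\<^sup>+v. f v \<partial>(distr lborel borel ((+) c)))"
    by (simp add: lborel_distr_plus)
  also have "\<dots> = (\<integral>\<^sup>+v. f (c + v) \<partial>lborel)"
    by (subst nn_integral_distr) auto
  finally show ?thesis by simp
qed

context vt
begin

lemma u_cont: "continuous_on UNIV u"
  using u_diff differentiable_imp_continuous_within continuous_at_imp_continuous_on by blast

lemma u_meas[measurable]: "u \<in> borel_measurable borel"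
  using u_cont borel_measurable_continuous_onI by blast

lemma u_nn1: "(\<integral>\<^sup>+y. ennreal (u y) \<partial>lborel) = 1"
  using u_int u_int1 u_pos by (subst nn_integral_eq_integral) (auto intro: less_imp_le)

lemma u_nn1_shift: "(\<integral>\<^sup>+v. ennreal (u (x + v)) \<partial>lborel) = 1"
  using nn_translate[of "\<lambda>y. ennreal (u y)" x] u_nn1 by simp

lemma FG: "u x * exp (T * (p \<bullet> p)) * (4 * pi * T) powr (real CARD('n) / 2) \<le> 1"
  if p: "p = (1 / u x) *\<^sub>R grad u x" for x p
proof -
  define c where "c = u x * exp (T * (p \<bullet> p))"
  have cpos: "c > 0" using u_pos[of x] by (simp add: c_def)
  have pt: "u (x + v) \<ge> c * exp (- ((v - (2 * T) *\<^sub>R p) \<bullet> (v - (2 * T) *\<^sub>R p)) / (4 * T))" for v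
  proof -
    have "(1 / u x) * (grad u x \<bullet> v) = p \<bullet> v" using p by simp
    moreover have "p \<bullet> v - (v \<bullet> v) / (4 * T) = T * (p \<bullet> p) + (- ((v - (2 * T) *\<^sub>R p) \<bullet> (v - (2 * T) *\<^sub>R p)) / (4 * T))"
      using Tpos by (simp add: inner_diff_left inner_diff_right inner_commute field_simps power2_eq_square)
    ultimately show ?thesis using semiU[of x v] by (simp add: c_def exp_add[symmetric] mult.assoc)
  qed
  have "(\<integral>\<^sup>+v. ennreal (c * exp (- ((v - (2 * T) *\<^sub>R p) \<bullet> (v - (2 * T) *\<^sub>R p)) / (4 * T))) \<partial>lborel)
       \<le> (\<integral>\<^sup>+v. ennreal (u (x + v)) \<partial>lborel)"
    by (intro nn_integral_mono ennreal_leI pt)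
  also have "\<dots> = 1" by (rule u_nn1_shift)
  finally have le1: "(\<integral>\<^sup>+v. ennreal (c * exp (- ((v - (2 * T) *\<^sub>R p) \<bullet> (v - (2 * T) *\<^sub>R p)) / (4 * T))) \<partial>lborel) \<le> 1" .
  have "(\<integral>\<^sup>+v. ennreal (c * exp (- ((v - (2 * T) *\<^sub>R p) \<bullet> (v - (2 * T) *\<^sub>R p)) / (4 * T))) \<partial>lborel)
     = ennreal c * (\<integral>\<^sup>+v. ennreal (exp (- ((- (2 * T) *\<^sub>R p + v) \<bullet> (- (2 * T) *\<^sub>R p + v)) / (4 * T))) \<partial>lborel)"
    using cpos by (simp add: ennreal_mult nn_integral_cmult algebra_simps)
  also have "(\<integral>\<^sup>+v. ennreal (exp (- ((- (2 * T) *\<^sub>R p + v) \<bullet> (- (2 * T) *\<^sub>R p + v)) / (4 * T))) \<partial>lborel)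
      = (\<integral>\<^sup>+v. ennreal (exp (- (v \<bullet> v) / (4 * T))) \<partial>(lborel :: (real^'n) measure))"
    by (rule nn_translate[of "\<lambda>v. ennreal (exp (- (v \<bullet> v) / (4 * T)))"]) simp
  also have "\<dots> = ennreal ((4 * pi * T) powr (real CARD('n) / 2))"
    using gaussN[OF Tpos, where 'a="real^'n"] by simp
  finally have "ennreal c * ennreal ((4 * pi * T) powr (real CARD('n) / 2)) \<le> 1" using le1 by simp
  then have "ennreal (c * (4 * pi * T) powr (real CARD('n) / 2)) \<le> ennreal 1"
    using cpos by (simp add: ennreal_mult)
  then have "c * (4 * pi * T) powr (real CARD('n) / 2) \<le> 1"
    by (subst (asm) ennreal_le_iff) auto
  then show ?thesis by (simp add: c_def)
qed

end

lemma nn_reflect: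
  fixes f :: "'a::euclidean_space \<Rightarrow> ennreal"
  assumes [measurable]: "f \<in> borel_measurable borel"
  shows "(\<integral>\<^sup>+v. f (c - v) \<partial>lborel) = (\<integral>\<^sup>+v. f v \<partial>lborel)"
proof -
  have L: "lborel = distr lborel borel (\<lambda>x::'a. c - x)"
    using lborel_affine[of "-1" c] by (simp add: density_1)
  have "(\<integral>\<^sup>+v. f v \<partial>lborel) = (\<integral>\<^sup>+v. f v \<partial>(distr lborel borel (\<lambda>x::'a. c - x)))"
    using L by simp
  also have "\<dots> = (\<integral>\<^sup>+v. f (c - v) \<partial>lborel)"
    by (subst nn_integral_distr) auto
  finally show ?thesis by simp
qed

context vt
begin

lemma ind_u_meas: "(\<lambda>y. indicator A y * ennreal (u y)) \<in> borel_measurable borel" if [measurable]: "A \<in> sets borel" for A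
  by measurable

definition Kb :: real where "Kb = exp (- 1 / (4 * T)) * unit_ball_vol (real CARD('n))"

lemma Kb_pos: "Kb > 0" unfolding Kb_def by simp

lemma local_bound:
  "ennreal (u x) * ennreal (2 * Kb) \<le> 2 * (\<integral>\<^sup>+y. indicator (ball x 1) y * ennreal (u y) \<partial>lborel)"
proof -
  define B where "B = ball (0::real^'n) 1"
  have [measurable]: "B \<in> sets borel" by (simp add: B_def)
  have pt: "ennreal (2 * u x * exp (- 1 / (4 * T))) * indicator B v \<le> indicator B v * ennreal (u (x + v) + u (x - v))" for v
  proof (cases "v \<in> B")
    case True
    then have "norm v < 1" unfolding B_def by simp
    then have "(norm v)\<^sup>2 \<le> 1" using power_le_one[of "norm v" 2] by simp
    then have nv: "v \<bullet> v \<le> 1" by (simp add: power2_norm_eq_inner)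
    define a where "a = (1 / u x) * (grad u x \<bullet> v)"
    define q where "q = (v \<bullet> v) / (4 * T)"
    have q: "q \<le> 1 / (4 * T)" unfolding q_def using nv Tpos by (simp add: divide_right_mono)
    have "u (x + v) \<ge> u x * exp (a - q)" using semiU[of x v] by (simp add: a_def q_def)
    moreover have "u (x + (- v)) \<ge> u x * exp (- a - q)" using semiU[of x "- v"] by (simp add: a_def q_def)
    moreover have "exp (a - q) + exp (- a - q) \<ge> 2 * exp (- 1 / (4 * T))"
    proof -
      have y: "exp a > 0" by simp
      have "(exp a - 1)\<^sup>2 / exp a \<ge> 0" by simp
      moreover have "(exp a - 1)\<^sup>2 / exp a = exp a + inverse (exp a) - 2"
        using y by (simp add: field_simps power2_eq_square)
      ultimately have s2: "exp a + exp (- a) \<ge> 2" by (simp add: exp_minus)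
      have eq: "q \<le> 1 / (4 * T)" by (rule q)
      have "exp (- q) \<ge> exp (- 1 / (4 * T))" using eq by simp
      then have "(exp a + exp (- a)) * exp (- q) \<ge> 2 * exp (- 1 / (4 * T))"
        using s2 by (intro mult_mono) auto
      moreover have "exp (a - q) = exp a * exp (- q)" by (simp flip: exp_add)
      moreover have "exp (- a - q) = exp (- a) * exp (- q)" by (simp flip: exp_add)
      ultimately show ?thesis by (simp add: distrib_right)
    qed
    ultimately have "u (x + v) + u (x - v) \<ge> 2 * u x * exp (- 1 / (4 * T))"
    proof -
      assume a1: "u (x + v) \<ge> u x * exp (a - q)" and a2: "u (x + (- v)) \<ge> u x * exp (- a - q)"
        and a3: "exp (a - q) + exp (- a - q) \<ge> 2 * exp (- 1 / (4 * T))"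
      have "u x * (exp (a - q) + exp (- a - q)) \<ge> u x * (2 * exp (- 1 / (4 * T)))"
        using a3 u_pos[of x] by (intro mult_left_mono) auto
      then show ?thesis using a1 a2 by (simp add: distrib_left)
    qed
    then show ?thesis using True by (simp add: ennreal_leI)
  qed (simp)
  define F where "F = (\<integral>\<^sup>+y. indicator (ball x 1) y * ennreal (u y) \<partial>lborel)"
  have I1: "(\<integral>\<^sup>+v. ennreal (2 * u x * exp (- 1 / (4 * T))) * indicator B v \<partial>lborel)
     \<le> (\<integral>\<^sup>+v. indicator B v * ennreal (u (x + v) + u (x - v)) \<partial>lborel)"
    by (intro nn_integral_mono pt)
  have I2: "(\<integral>\<^sup>+v. indicator B v * ennreal (u (x + v) + u (x - v)) \<partial>lborel) = (\<integral>\<^sup>+v. indicator B v * ennreal (u (x + v)) + indicator B v * ennreal (u (x - v)) \<partial>lborel)"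
    by (intro nn_integral_cong) (simp add: ennreal_plus less_imp_le u_pos distrib_left)
  have I3: "(\<integral>\<^sup>+v. indicator B v * ennreal (u (x + v)) + indicator B v * ennreal (u (x - v)) \<partial>lborel) = (\<integral>\<^sup>+v. indicator B v * ennreal (u (x + v)) \<partial>lborel) + (\<integral>\<^sup>+v. indicator B v * ennreal (u (x - v)) \<partial>lborel)"
    by (rule nn_integral_add) measurable
  have I4: "(\<integral>\<^sup>+v. indicator B v * ennreal (u (x + v)) \<partial>lborel) = F"
  proof -
    have "(\<integral>\<^sup>+v. indicator B v * ennreal (u (x + v)) \<partial>lborel) = (\<integral>\<^sup>+v. indicator (ball x 1) (x + v) * ennreal (u (x + v)) \<partial>lborel)"
      by (intro nn_integral_cong) (simp add: B_def indicator_def dist_norm)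
    also have "\<dots> = F" unfolding F_def
      by (rule nn_translate[of "\<lambda>y. indicator (ball x 1) y * ennreal (u y)"]) (simp add: ind_u_meas)
    finally show ?thesis .
  qed
  have I5: "(\<integral>\<^sup>+v. indicator B v * ennreal (u (x - v)) \<partial>lborel) = F"
  proof -
    have "(\<integral>\<^sup>+v. indicator B v * ennreal (u (x - v)) \<partial>lborel) = (\<integral>\<^sup>+v. indicator (ball x 1) (x - v) * ennreal (u (x - v)) \<partial>lborel)"
      by (intro nn_integral_cong) (simp add: B_def indicator_def dist_norm)
    also have "\<dots> = F" unfolding F_def
      by (rule nn_reflect[of "\<lambda>y. indicator (ball x 1) y * ennreal (u y)"]) (simp add: ind_u_meas)
    finally show ?thesis .
  qed
  have mB: "emeasure lborel B = ennreal (unit_ball_vol (real CARD('n)))"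
    using emeasure_ball[of 1 "0::real^'n"] by (simp add: B_def)
  have I6: "(\<integral>\<^sup>+v. ennreal (2 * u x * exp (- 1 / (4 * T))) * indicator B v \<partial>lborel)
      = ennreal (2 * u x * exp (- 1 / (4 * T))) * ennreal (unit_ball_vol (real CARD('n)))"
    by (subst nn_integral_cmult_indicator) (simp_all only: mB sets_lborel \<open>B \<in> sets borel\<close>)
  have I7: "ennreal (2 * u x * exp (- 1 / (4 * T))) * ennreal (unit_ball_vol (real CARD('n))) = ennreal (u x) * ennreal (2 * Kb)"
  proof -
    have "ennreal (2 * u x * exp (- 1 / (4 * T))) * ennreal (unit_ball_vol (real CARD('n)))
        = ennreal (2 * u x * exp (- 1 / (4 * T)) * unit_ball_vol (real CARD('n)))"
      using u_pos[of x] by (intro ennreal_mult[symmetric]) auto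
    also have "\<dots> = ennreal (u x * (2 * Kb))" by (simp add: Kb_def mult_ac)
    also have "\<dots> = ennreal (u x) * ennreal (2 * Kb)"
      using u_pos[of x] Kb_pos by (intro ennreal_mult) auto
    finally show ?thesis .
  qed
  have "ennreal (u x) * ennreal (2 * Kb) \<le> F + F"
    using I1 I2 I3 I4 I5 I6 I7 by simp
  then show ?thesis unfolding F_def by (simp only: mult_2)
qed

end

context vt
begin

lemma tail: "\<exists>R. (\<integral>\<^sup>+y. indicator {y. R \<le> norm y} y * ennreal (u y) \<partial>lborel) < ennreal e" if e: "e > 0" for e
proof -
  define f where "f n y = indicator {y. real n \<le> norm y} y * ennreal (u y)" for n :: nat and y :: "real^'n"
  have fm: "f n \<in> borel_measurable borel" for n unfolding f_def by (rule ind_u_meas) measurable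
  have dec: "decseq f"
  proof (rule decseq_SucI, rule le_funI)
    fix n y show "f (Suc n) y \<le> f n y"
      unfolding f_def by (cases "real (Suc n) \<le> norm y") (auto simp: indicator_def)
  qed
  have fin: "(\<integral>\<^sup>+y. f n y \<partial>lborel) < \<infinity>" for n
  proof -
    have "(\<integral>\<^sup>+y. f n y \<partial>lborel) \<le> (\<integral>\<^sup>+y. ennreal (u y) \<partial>lborel)"
      unfolding f_def by (intro nn_integral_mono) (simp add: indicator_def)
    then show ?thesis using u_nn1 by (simp add: order_le_less_trans)
  qed
  have inf0: "(INF n. f n y) = 0" for y
  proof -
    obtain n :: nat where "norm y < real n" using reals_Archimedean2 by blast
    then have "f n y = 0" by (simp add: f_def)
    then show ?thesis by (metis INF_lower UNIV_I antisym zero_le)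
  qed
  have fm': "f n \<in> borel_measurable lborel" for n using fm by simp
  have "(INF n. (\<integral>\<^sup>+y. f n y \<partial>lborel)) = (\<integral>\<^sup>+y. (INF n. f n y) \<partial>lborel)"
    using nn_integral_monotone_convergence_INF_decseq[OF dec fm' fin] by simp
  also have "\<dots> = 0" by (simp add: inf0)
  finally have "(INF n. (\<integral>\<^sup>+y. f n y \<partial>lborel)) < ennreal e" using e by simp
  then obtain n where "(\<integral>\<^sup>+y. f n y \<partial>lborel) < ennreal e" by (auto simp: INF_less_iff)
  then show ?thesis unfolding f_def by blast
qed

lemma u_tendsto: "(u \<longlongrightarrow> 0) at_infinity"
proof (rule tendstoI)
  fix e :: real assume e: "e > 0"
  obtain R where R: "(\<integral>\<^sup>+y. indicator {y. R \<le> norm y} y * ennreal (u y) \<partial>lborel) < ennreal (e * Kb)"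
    using tail[of "e * Kb"] e Kb_pos by auto
  have "dist (u x) 0 < e" if x: "norm x \<ge> R + 1" for x
  proof -
    have "(\<integral>\<^sup>+y. indicator (ball x 1) y * ennreal (u y) \<partial>lborel) \<le> (\<integral>\<^sup>+y. indicator {y. R \<le> norm y} y * ennreal (u y) \<partial>lborel)"
    proof (intro nn_integral_mono)
      fix y :: "real^'n"
      show "indicator (ball x 1) y * ennreal (u y) \<le> indicator {y. R \<le> norm y} y * ennreal (u y)"
      proof (cases "y \<in> ball x 1")
        case True
        then have "norm (x - y) < 1" by (simp add: dist_norm)
        then have "R \<le> norm y" using x norm_triangle_ineq2[of x y] by linarith
        then show ?thesis using True by simp
      qed simp
    qed
    then have "ennreal (u x) * ennreal (2 * Kb) < 2 * ennreal (e * Kb)"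
      using local_bound[of x] R
      by (metis (no_types, lifting) ennreal_mult_less_top dual_order.strict_trans1 ennreal_less_top
            ennreal_mult_strict_left_mono ennreal_numeral mult_left_mono order_le_less_trans zero_le zero_less_numeral ennreal_numeral_less_top numeral_ne_infinity)
    moreover have "ennreal (u x) * ennreal (2 * Kb) = ennreal (u x * (2 * Kb))"
      using u_pos[of x] Kb_pos by (intro ennreal_mult[symmetric]) auto
    moreover have "2 * ennreal (e * Kb) = ennreal (2 * (e * Kb))"
      using e Kb_pos u_pos[of x] by (subst ennreal_mult) auto
    ultimately have "ennreal (u x * (2 * Kb)) < ennreal (2 * (e * Kb))" by simp
    then have "u x * (2 * Kb) < 2 * (e * Kb)"
      using e Kb_pos u_pos[of x] by (subst (asm) ennreal_less_iff) auto
    then have "u x < e" using Kb_pos by (simp add: field_simps)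
    then show ?thesis using u_pos[of x] by (simp add: dist_real_def)
  qed
  then show "eventually (\<lambda>x. dist (u x) 0 < e) at_infinity"
    unfolding eventually_at_infinity by blast
qed

end

context vt
begin


lemma P_pos: "(4 * pi * T) powr (real CARD('n) / 2) > 0" using Tpos by simp

lemma FG': "u x * exp (T * (p \<bullet> p)) \<le> (4 * pi * T) powr (- real CARD('n) / 2)"
  if p: "p = (1 / u x) *\<^sub>R grad u x" for x p
proof -
  have "u x * exp (T * (p \<bullet> p)) * (4 * pi * T) powr (real CARD('n) / 2) \<le> 1" using FG[OF p] .
  then have "u x * exp (T * (p \<bullet> p)) \<le> 1 / (4 * pi * T) powr (real CARD('n) / 2)"
    using P_pos by (simp add: field_simps)
  also have "\<dots> = (4 * pi * T) powr (- real CARD('n) / 2)"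
    using Tpos by (simp add: powr_minus_divide)
  finally show ?thesis .
qed

lemma u_le_A: "u x \<le> (4 * pi * T) powr (- real CARD('n) / 2)"
proof -
  define p where "p = (1 / u x) *\<^sub>R grad u x"
  have "u x * 1 \<le> u x * exp (T * (p \<bullet> p))"
    using u_pos[of x] Tpos by (intro mult_left_mono) (auto simp: inner_ge_zero)
  then show ?thesis using FG'[OF p_def] by simp
qed

lemma exists_max: "\<exists>z0. \<forall>x. u x \<le> u z0"
proof -
  have "eventually (\<lambda>x. dist (u x) 0 < u 0) at_infinity"
    using u_tendsto u_pos[of 0] tendstoD by blast
  then obtain R where R: "\<And>x. norm x \<ge> R \<Longrightarrow> u x < u 0"
    unfolding eventually_at_infinity using u_pos by (force simp: dist_real_def)
  have "\<not> norm (0::real^'n) \<ge> R" using R by force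
  then have R0: "R > 0" by simp
  have cc: "continuous_on (cball 0 R) u" using u_cont continuous_on_subset by blast
  have ne: "cball (0::real^'n) R \<noteq> {}" using R0 by simp
  obtain z0 where z0: "z0 \<in> cball 0 R" "\<And>y. y \<in> cball 0 R \<Longrightarrow> u y \<le> u z0"
    using continuous_attains_sup[OF compact_cball ne cc] by blast
  have "u x \<le> u z0" for x
  proof (cases "x \<in> cball 0 R")
    case False
    then have "norm x \<ge> R" by simp
    then have "u x < u 0" by (rule R)
    also have "u 0 \<le> u z0" using z0(2)[of 0] R0 by simp
    finally show ?thesis by simp
  qed (use z0 in auto)
  then show ?thesis by blast
qed

lemma max_grad0:
  assumes m: "\<And>x. u x \<le> u z0"
  shows "grad u z0 = 0"
proof -
  define p where "p = (1 / u z0) *\<^sub>R grad u z0"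
  define v where "v = (2 * T) *\<^sub>R p"
  have a: "L (z0 + v) \<ge> L z0 + grad L z0 \<bullet> v - (v \<bullet> v) / (4 * T)" by (rule semiB)
  have b: "grad L z0 \<bullet> v - (v \<bullet> v) / (4 * T) = T * (p \<bullet> p)"
    using Tpos by (simp add: grad_L p_def[symmetric] v_def field_simps power2_eq_square)
  from a b have "L z0 + T * (p \<bullet> p) \<le> L (z0 + v)" by linarith
  moreover have "L (z0 + v) \<le> L z0" unfolding L_def using m u_pos by simp
  ultimately have "T * (p \<bullet> p) \<le> 0" by simp
  then have "p \<bullet> p \<le> 0" using Tpos by (simp add: mult_le_0_iff)
  then have "p = 0" by (metis inner_eq_zero_iff inner_ge_zero order_antisym)
  then show ?thesis using u_pos[of z0] by (simp add: p_def)
qed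

lemma part1:
  "\<exists>z0. \<forall>x. 0 < u z0 * exp (- (norm (x - z0))\<^sup>2 / (4 * T)) \<and>
                 u z0 * exp (- (norm (x - z0))\<^sup>2 / (4 * T)) \<le> u x \<and>
                 u x \<le> u z0 \<and>
                 u z0 \<le> (4 * pi * T) powr (- real CARD('n) / 2)"
proof -
  obtain z0 where m: "\<And>x. u x \<le> u z0" using exists_max by blast
  have g0: "grad u z0 = 0" by (rule max_grad0[OF m])
  have "u z0 * exp (- (norm (x - z0))\<^sup>2 / (4 * T)) \<le> u x" for x
    using semiU[of z0 "x - z0"] g0 by (simp add: power2_norm_eq_inner)
  then show ?thesis using m u_pos u_le_A by (intro exI[of _ z0]) auto
qed

lemma grad_bound: "(norm (grad u x))\<^sup>2 \<le> 4 * pi / exp 1 * (4 * pi * T) powr (- (real CARD('n) + 2) / 2) * u x"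
proof -
  define A where "A = (4 * pi * T) powr (- real CARD('n) / 2)"
  have Apos: "A > 0" using Tpos by (simp add: A_def)
  define p where "p = (1 / u x) *\<^sub>R grad u x"
  have ux: "u x > 0" by (rule u_pos)
  have gp: "grad u x = u x *\<^sub>R p" using ux by (simp add: p_def)
  have "u x * exp (T * (p \<bullet> p)) \<le> A" using FG'[OF p_def] by (simp add: A_def)
  then have "exp (T * (p \<bullet> p)) \<le> A / u x" using ux by (simp add: field_simps)
  then have "T * (p \<bullet> p) \<le> ln (A / u x)"
    using ux Apos by (metis divide_pos_pos exp_le_cancel_iff exp_ln)
  also have "ln (A / u x) \<le> (A / u x) / exp 1"
  proof -
    have "ln ((A / u x) / exp 1) \<le> (A / u x) / exp 1 - 1"
      using ux Apos by (intro ln_le_minus_one) simp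
    then show ?thesis using ux Apos by (simp add: ln_div ln_mult)
  qed
  finally have "T * (p \<bullet> p) \<le> A / (u x * exp 1)" by simp
  then have "p \<bullet> p \<le> (A / (u x * exp 1)) / T" using Tpos by (subst pos_le_divide_eq) (auto simp: mult.commute)
  then have pp: "p \<bullet> p \<le> A / (u x * exp 1 * T)" by simp
  have "(norm (grad u x))\<^sup>2 = (u x)\<^sup>2 * (p \<bullet> p)" unfolding gp power2_norm_eq_inner by (simp add: power2_eq_square)
  also have "\<dots> \<le> (u x)\<^sup>2 * (A / (u x * exp 1 * T))" using pp by (intro mult_left_mono) auto
  also have "\<dots> = A / (exp 1 * T) * u x" using ux by (simp add: field_simps power2_eq_square)
  also have "A / (exp 1 * T) = 4 * pi / exp 1 * (4 * pi * T) powr (- (real CARD('n) + 2) / 2)"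
  proof -
    have "(4 * pi * T) powr (- (real CARD('n) + 2) / 2) = (4 * pi * T) powr (- real CARD('n) / 2 + (- 1))"
    proof -
      have e: "- (real CARD('n) + 2) / 2 = - real CARD('n) / 2 + (- 1)" by (simp add: divide_simps)
      show ?thesis by (simp only: e)
    qed
    also have "\<dots> = (4 * pi * T) powr (- real CARD('n) / 2) * (4 * pi * T) powr (- 1)" by (rule powr_add)
    also have "\<dots> = A / (4 * pi * T)" using Tpos by (simp add: A_def powr_neg_one)
    finally show ?thesis using Tpos by (simp add: field_simps)
  qed
  finally show ?thesis .
qed

lemma grad_bound2: "4 * pi / exp 1 * (4 * pi * T) powr (- (real CARD('n) + 2) / 2) * u x
              \<le> 4 * pi / exp 1 * (4 * pi * T) powr (- real CARD('n) - 1)"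
proof -
  have "(4 * pi * T) powr (- (real CARD('n) + 2) / 2) * u x \<le> (4 * pi * T) powr (- (real CARD('n) + 2) / 2) * (4 * pi * T) powr (- real CARD('n) / 2)"
    using u_le_A by (intro mult_left_mono) auto
  also have "\<dots> = (4 * pi * T) powr (- real CARD('n) - 1)"
  proof -
    have e: "- (real CARD('n) + 2) / 2 + - real CARD('n) / 2 = - real CARD('n) - 1" by (simp add: field_simps)
    show ?thesis by (metis powr_add e)
  qed
  finally have "(4 * pi * T) powr (- (real CARD('n) + 2) / 2) * u x \<le> (4 * pi * T) powr (- real CARD('n) - 1)" .
  moreover have "0 \<le> 4 * pi / exp 1" by simp
  ultimately show ?thesis using mult_left_mono unfolding mult.assoc by blast
qed

lemma grad_tendsto: "((\<lambda>x. norm (grad u x)) \<longlongrightarrow> 0) at_infinity"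
proof -
  define C where "C = 4 * pi / exp 1 * (4 * pi * T) powr (- (real CARD('n) + 2) / 2)"
  have "((\<lambda>x. sqrt (C * u x)) \<longlongrightarrow> sqrt (C * 0)) at_infinity"
    by (intro tendsto_intros u_tendsto)
  then have l: "((\<lambda>x. sqrt (C * u x)) \<longlongrightarrow> 0) at_infinity" by simp
  have "norm (norm (grad u x)) \<le> sqrt (C * u x)" for x
    using grad_bound[of x] unfolding C_def by (simp add: real_le_rsqrt)
  then show ?thesis by (intro Lim_null_comparison[OF _ l]) auto
qed

end

lemma lim_aux: "T > 0 \<Longrightarrow> ((\<lambda>n. (1 - exp (- (inverse (real (Suc n)))\<^sup>2 / (4 * T))) / (inverse (real (Suc n)))\<^sup>2) \<longlongrightarrow> inverse T / 4) sequentially"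
  by real_asymp

lemma mv_axis: "(A *v axis j (1::real)) $ k = A $ k $ j"
  by (simp add: matrix_vector_mult_def axis_def if_distrib cong: if_cong)

lemma quad_axis: "(axis i 1) \<bullet> ((A::real^'n^'n) *v axis j 1) = A $ i $ j"
  by (simp add: inner_axis' mv_axis)

lemma quad_pair:
  fixes A :: "real^'n^'n"
  shows "(axis i 1 + s *\<^sub>R axis j 1) \<bullet> (A *v (axis i 1 + s *\<^sub>R axis j 1))
     = A $ i $ i + s * (A $ i $ j + A $ j $ i) + s\<^sup>2 * A $ j $ j"
  by (simp add: matrix_vector_right_distrib matrix_vector_mult_scaleR inner_add_left inner_add_right
       quad_axis algebra_simps power2_eq_square)

lemma quad_scaled:
  fixes A :: "real^'n^'n"
  shows "(c *\<^sub>R axis i 1) \<bullet> (A *v (c *\<^sub>R axis i 1)) = c\<^sup>2 * A $ i $ i"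
  by (simp add: matrix_vector_mult_scaleR quad_axis power2_eq_square)

context vt
begin

lemma hessU: "v \<bullet> (hess u x *v v) \<ge> - u x * (v \<bullet> v) / (2 * T)"
proof -
  define a where "a = v \<bullet> (hess u x *v v)"
  define b where "b = grad u x \<bullet> v"
  define c where "c = u x"
  have c: "c > 0" using u_pos by (simp add: c_def)
  have d1: "DERIV (\<lambda>t. u (x + t *\<^sub>R v)) 0 :> b"
    using line_deriv1[OF u_diff, where x=x and t=0 and v=v] by (simp add: b_def)
  have d2: "DERIV (\<lambda>t. grad u (x + t *\<^sub>R v) \<bullet> v) 0 :> a"
    using line_deriv2[OF gu_diff, where x=x and t=0 and v=v] by (simp add: a_def)
  have dq: "DERIV (\<lambda>t. (grad u (x + t *\<^sub>R v) \<bullet> v) / u (x + t *\<^sub>R v)) 0 :> (a * c - b * b) / (c * c)"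
    using DERIV_divide[OF d2 d1] u_pos[of x] by (simp add: b_def c_def)
  have eqf: "(\<lambda>t. grad L (x + t *\<^sub>R v) \<bullet> v) = (\<lambda>t. (grad u (x + t *\<^sub>R v) \<bullet> v) / u (x + t *\<^sub>R v))"
    by (simp add: fun_eq_iff grad_L)
  have dL: "DERIV (\<lambda>t. grad L (x + t *\<^sub>R v) \<bullet> v) 0 :> v \<bullet> (hess L x *v v)"
    using line_deriv2[OF gL_diff, where x=x and t=0 and v=v] by simp
  have hl: "v \<bullet> (hess L x *v v) = (a * c - b * b) / (c * c)"
    using DERIV_unique[OF dL] dq eqf by simp
  have "2 * T * ((a * c - b * b) / (c * c)) + v \<bullet> v \<ge> 0" using semi[where v=v and x=x] hl by simp
  then have "(2 * T * ((a * c - b * b) / (c * c)) + v \<bullet> v) * (c * c) \<ge> 0" using c by simp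
  moreover have "(2 * T * ((a * c - b * b) / (c * c)) + v \<bullet> v) * (c * c) = 2 * T * (a * c - b * b) + (v \<bullet> v) * (c * c)"
    using c by (simp add: field_simps)
  ultimately have "2 * T * (a * c - b * b) + (v \<bullet> v) * (c * c) \<ge> 0" by simp
  moreover have "b * b \<ge> 0" by simp
  ultimately have "2 * T * (a * c) + (v \<bullet> v) * (c * c) \<ge> 0" using Tpos
    by (smt (verit) mult_nonneg_nonneg right_diff_distrib)
  then have "(2 * T * a + (v \<bullet> v) * c) * c \<ge> 0" by (simp add: algebra_simps)
  then have "2 * T * a + (v \<bullet> v) * c \<ge> 0" using c by (simp add: zero_le_mult_iff)
  then have "a \<ge> - c * (v \<bullet> v) / (2 * T)" using Tpos by (simp add: field_simps)
  then show ?thesis by (simp add: a_def c_def)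
qed

definition S :: "'n \<Rightarrow> real^'n \<Rightarrow> real" where
  "S i x = hess u x $ i $ i + u x / (2 * T)"

lemma S_nonneg: "S i x \<ge> 0"
  using hessU[where v="axis i 1" and x=x] by (simp add: S_def quad_axis inner_axis_axis)

lemma hess_symm: "hess u x $ i $ j = hess u x $ j $ i"
  by (rule hess_sym[OF u_diff gu_diff hu_cont])

lemma entry_bound: "\<bar>hess u x $ i $ j\<bar> \<le> (S i x + S j x) / 2 + u x / (2 * T)"
proof (cases "i = j")
  case True
  define a where "a = u x / (2 * T)"
  have a: "a > 0" using u_pos[of x] Tpos by (simp add: a_def)
  have q: "- a \<le> hess u x $ i $ i" using S_nonneg[of i x] unfolding S_def a_def[symmetric] by linarith
  show ?thesis unfolding S_def a_def[symmetric] using q a True by (auto simp: abs_le_iff field_simps)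
next
  case False
  have vv: "(axis i 1 + s *\<^sub>R axis j 1) \<bullet> (axis i 1 + s *\<^sub>R axis j (1::real)) = 1 + s\<^sup>2" for s :: real
    using False by (simp add: inner_add_left inner_add_right inner_axis_axis power2_eq_square)
  have p: "hess u x $ i $ i + s * (2 * hess u x $ i $ j) + s\<^sup>2 * hess u x $ j $ j \<ge> - u x * (1 + s\<^sup>2) / (2 * T)" for s :: real
    using hessU[where v="axis i 1 + s *\<^sub>R axis j 1" and x=x] vv[of s] hess_symm[where i=i and j=j and x=x]
    unfolding quad_pair by simp
  have p1: "hess u x $ i $ i + 2 * hess u x $ i $ j + hess u x $ j $ j \<ge> - u x / T"
    using p[of 1] Tpos by (simp add: field_simps)
  have p2: "hess u x $ i $ i - 2 * hess u x $ i $ j + hess u x $ j $ j \<ge> - u x / T"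
    using p[of "-1"] Tpos by (simp add: field_simps)
  have "S i x + S j x = hess u x $ i $ i + hess u x $ j $ j + u x / T"
    using Tpos by (simp add: S_def field_simps)
  then have "\<bar>hess u x $ i $ j\<bar> \<le> (S i x + S j x) / 2" using p1 p2 by (simp add: abs_le_iff)
  then show ?thesis using u_pos[of x] Tpos by (smt (verit) divide_pos_pos)
qed

lemma norm_hess_bound:
  "norm (hess u x) \<le> real CARD('n) * (\<Sum>i\<in>UNIV. S i x) + (real CARD('n))\<^sup>2 * (u x / (2 * T))"
proof -
  have "norm (hess u x) \<le> (\<Sum>i\<in>UNIV. norm (hess u x $ i))"
    unfolding norm_vec_def by (rule L2_set_le_sum) simp
  also have "\<dots> \<le> (\<Sum>i\<in>UNIV. \<Sum>j\<in>UNIV. \<bar>hess u x $ i $ j\<bar>)"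
    by (intro sum_mono norm_le_l1_cart)
  also have "\<dots> \<le> (\<Sum>i\<in>UNIV. \<Sum>j\<in>UNIV. (S i x + S j x) / 2 + u x / (2 * T))"
    by (intro sum_mono entry_bound)
  also have "\<dots> = real CARD('n) * (\<Sum>i\<in>UNIV. S i x) + (real CARD('n))\<^sup>2 * (u x / (2 * T))"
  proof -
    have "(\<Sum>i\<in>UNIV. \<Sum>j\<in>UNIV. (S i x + S j x) / 2 + u x / (2 * T))
       = (\<Sum>i\<in>UNIV. \<Sum>j\<in>(UNIV::'n set). S i x / 2) + (\<Sum>i\<in>(UNIV::'n set). \<Sum>j\<in>UNIV. S j x / 2) + (\<Sum>i\<in>(UNIV::'n set). \<Sum>j\<in>(UNIV::'n set). u x / (2 * T))"
      by (simp add: sum.distrib add_divide_distrib)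
    also have "\<dots> = real CARD('n) * (\<Sum>i\<in>UNIV. S i x) + (real CARD('n))\<^sup>2 * (u x / (2 * T))"
      by (simp add: sum_divide_distrib[symmetric] sum_distrib_left[symmetric] power2_eq_square algebra_simps)
    finally show ?thesis .
  qed
  finally show ?thesis .
qed

end

context vt
begin

definition hh :: "nat \<Rightarrow> real" where "hh n = inverse (real (Suc n))"

lemma hh_pos: "hh n > 0" by (simp add: hh_def)

lemma hh_lim: "hh \<longlonglongrightarrow> 0" unfolding hh_def by (rule LIMSEQ_inverse_real_of_nat)

definition gfun :: "'n \<Rightarrow> nat \<Rightarrow> real^'n \<Rightarrow> real" where
  "gfun i n x = (u (x + hh n *\<^sub>R axis i 1) + u (x - hh n *\<^sub>R axis i 1) - 2 * u x * exp (- (hh n)\<^sup>2 / (4 * T))) / (hh n)\<^sup>2"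

lemma g_nonneg: "gfun i n x \<ge> 0"
proof -
  define h where "h = hh n"
  define v where "v = h *\<^sub>R axis i (1::real)"
  define m where "m = u x * exp (- h\<^sup>2 / (4 * T))"
  have h: "h > 0" using hh_pos by (simp add: h_def)
  have vv: "v \<bullet> v = h\<^sup>2" by (simp add: v_def inner_axis_axis power2_eq_square)
  have l1: "L (x + v) \<ge> L x + grad L x \<bullet> v - (v \<bullet> v) / (4 * T)" by (rule semiB)
  have l2: "L (x + (- v)) \<ge> L x + grad L x \<bullet> (- v) - ((- v) \<bullet> (- v)) / (4 * T)" by (rule semiB)
  have l2': "L (x - v) \<ge> L x - grad L x \<bullet> v - (v \<bullet> v) / (4 * T)" using l2 by simp
  have hh2: "2 * ((v \<bullet> v) / (4 * T)) = h\<^sup>2 / (2 * T)" using vv by simp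
  have "L (x + v) + L (x - v) \<ge> 2 * L x - h\<^sup>2 / (2 * T)" using l1 l2' hh2 by linarith
  then have A: "exp (L (x + v) + L (x - v)) \<ge> exp (2 * L x - h\<^sup>2 / (2 * T))" by (simp only: exp_le_cancel_iff)
  have B: "exp (L (x + v) + L (x - v)) = u (x + v) * u (x - v)"
    by (simp add: exp_add L_def u_pos)
  have C: "exp (2 * L x - h\<^sup>2 / (2 * T)) = m\<^sup>2"
  proof -
    define w where "w = - h\<^sup>2 / (4 * T)"
    have "2 * L x - h\<^sup>2 / (2 * T) = (L x + w) + (L x + w)" by (simp add: w_def field_simps)
    then have "exp (2 * L x - h\<^sup>2 / (2 * T)) = exp (L x + w) * exp (L x + w)" by (simp only: exp_add)
    also have "exp (L x + w) = u x * exp w" by (simp add: exp_add L_def u_pos)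
    finally show ?thesis by (simp add: m_def w_def power2_eq_square)
  qed
  have ab: "u (x + v) * u (x - v) \<ge> m\<^sup>2" using A B C by linarith
  have sq: "(u (x + v) + u (x - v))\<^sup>2 \<ge> 4 * (u (x + v) * u (x - v))"
  proof -
    have "(u (x + v) - u (x - v))\<^sup>2 \<ge> 0" by (rule zero_le_power2)
    moreover have "(u (x + v) + u (x - v))\<^sup>2 = (u (x + v) - u (x - v))\<^sup>2 + 4 * (u (x + v) * u (x - v))"
      by (simp add: power2_eq_square algebra_simps)
    ultimately show ?thesis by linarith
  qed
  have m2: "(2 * m)\<^sup>2 = 4 * m\<^sup>2" by (simp add: power2_eq_square)
  have "(2 * m)\<^sup>2 \<le> (u (x + v) + u (x - v))\<^sup>2" using ab sq m2 by linarith
  then have "2 * m \<le> u (x + v) + u (x - v)"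
  proof (rule power2_le_imp_le)
    show "0 \<le> u (x + v) + u (x - v)" using u_pos[of "x + v"] u_pos[of "x - v"] by linarith
  qed
  then have num: "0 \<le> u (x + v) + u (x - v) - 2 * u x * exp (- h\<^sup>2 / (4 * T))" unfolding m_def by linarith
  have "gfun i n x = (u (x + v) + u (x - v) - 2 * u x * exp (- h\<^sup>2 / (4 * T))) / h\<^sup>2"
    unfolding gfun_def h_def v_def by (rule refl)
  then show ?thesis using num by simp
qed

lemma u_shift: "integrable lborel (\<lambda>x. u (x + c)) \<and> (\<integral>x. u (x + c) \<partial>lborel) = 1"
proof -
  have m: "(+) c \<in> measurable lborel borel" by simp
  have "integrable (distr lborel borel ((+) c)) u" using u_int by (simp add: lborel_distr_plus)
  then have i: "integrable lborel (\<lambda>x. u (c + x))" using integrable_distr_eq[OF m u_meas] by simp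
  have "(\<integral>x. u (c + x) \<partial>lborel) = (\<integral>x. u x \<partial>(distr lborel borel ((+) c)))"
    using integral_distr[OF m u_meas] by simp
  also have "\<dots> = 1" using u_int1 by (simp add: lborel_distr_plus)
  finally show ?thesis using i by (simp add: add.commute)
qed

lemma g_int: "integrable lborel (gfun i n)" and g_intval: "(\<integral>x. gfun i n x \<partial>lborel) \<le> 1 / (2 * T)"
proof -
  define h where "h = hh n"
  define E where "E = exp (- h\<^sup>2 / (4 * T))"
  have h: "h > 0" using hh_pos by (simp add: h_def)
  have i1: "integrable lborel (\<lambda>x. u (x + h *\<^sub>R axis i 1))" using u_shift by blast
  have i2: "integrable lborel (\<lambda>x. u (x + (- h *\<^sub>R axis i 1)))" using u_shift by blast
  have e1: "(\<integral>x. u (x + h *\<^sub>R axis i 1) \<partial>lborel) = 1" using u_shift by blast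
  have e2: "(\<integral>x. u (x + (- h *\<^sub>R axis i 1)) \<partial>lborel) = 1" using u_shift by blast
  have gf: "gfun i n = (\<lambda>x. (u (x + h *\<^sub>R axis i 1) + u (x + (- h *\<^sub>R axis i 1)) - (2 * E) * u x) / h\<^sup>2)"
    by (simp add: fun_eq_iff gfun_def h_def E_def)
  have ii: "integrable lborel (\<lambda>x. u (x + h *\<^sub>R axis i 1) + u (x + (- h *\<^sub>R axis i 1)) - (2 * E) * u x)"
    using i1 i2 u_int by (intro Bochner_Integration.integrable_diff Bochner_Integration.integrable_add integrable_mult_right) auto
  then show "integrable lborel (gfun i n)" unfolding gf by (intro integrable_divide) auto
  have "(\<integral>x. gfun i n x \<partial>lborel) = (\<integral>x. u (x + h *\<^sub>R axis i 1) + u (x + (- h *\<^sub>R axis i 1)) - (2 * E) * u x \<partial>lborel) / h\<^sup>2"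
    unfolding gf by (rule integral_divide_zero)
  also have "(\<integral>x. u (x + h *\<^sub>R axis i 1) + u (x + (- h *\<^sub>R axis i 1)) - (2 * E) * u x \<partial>lborel)
      = (\<integral>x. u (x + h *\<^sub>R axis i 1) + u (x + (- h *\<^sub>R axis i 1)) \<partial>lborel) - (\<integral>x. (2 * E) * u x \<partial>lborel)"
    by (rule Bochner_Integration.integral_diff[OF Bochner_Integration.integrable_add[OF i1 i2] integrable_mult_right[OF u_int]])
  also have "(\<integral>x. u (x + h *\<^sub>R axis i 1) + u (x + (- h *\<^sub>R axis i 1)) \<partial>lborel) = 1 + 1"
    using Bochner_Integration.integral_add[OF i1 i2] e1 e2 by simp
  also have "(\<integral>x. (2 * E) * u x \<partial>lborel) = 2 * E * 1"
    using u_int1 by (simp only: integral_mult_right_zero)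
  finally have "(\<integral>x. gfun i n x \<partial>lborel) = (1 + 1 - 2 * E * 1) / h\<^sup>2" .
  also have "\<dots> \<le> 1 / (2 * T)"
  proof -
    have "E \<ge> 1 + (- h\<^sup>2 / (4 * T))" unfolding E_def by (rule exp_ge_add_one_self)
    then have "2 - 2 * E \<le> h\<^sup>2 / (2 * T)" by (simp add: field_simps)
    then have "(2 - 2 * E) / h\<^sup>2 \<le> (h\<^sup>2 / (2 * T)) / h\<^sup>2" using h by (intro divide_right_mono) auto
    then show ?thesis using h by simp
  qed
  finally show "(\<integral>x. gfun i n x \<partial>lborel) \<le> 1 / (2 * T)" .
qed

end

context vt
begin

lemma xi_lim:
  assumes "\<And>n. norm (\<xi> n - x) \<le> hh n"
  shows "\<xi> \<longlonglongrightarrow> x"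
proof -
  have "(\<lambda>n. \<xi> n - x) \<longlonglongrightarrow> 0"
    by (rule Lim_null_comparison[OF _ hh_lim]) (use assms in auto)
  then show ?thesis by (simp add: LIM_zero_iff)
qed

lemma g_lim: "(\<lambda>n. gfun i n x) \<longlonglongrightarrow> S i x"
proof -
  define e where "e = (axis i 1 :: real^'n)"
  have "\<forall>n. \<exists>t. 0 < t \<and> t < 1 \<and> u (x + hh n *\<^sub>R e) = u x + grad u x \<bullet> (hh n *\<^sub>R e)
      + ((hh n *\<^sub>R e) \<bullet> (hess u (x + t *\<^sub>R (hh n *\<^sub>R e)) *v (hh n *\<^sub>R e))) / 2"
    using taylor2[OF u_diff gu_diff] by blast
  then obtain t1 where t1: "\<And>n. 0 < t1 n \<and> t1 n < 1 \<and> u (x + hh n *\<^sub>R e) = u x + grad u x \<bullet> (hh n *\<^sub>R e)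
      + ((hh n *\<^sub>R e) \<bullet> (hess u (x + t1 n *\<^sub>R (hh n *\<^sub>R e)) *v (hh n *\<^sub>R e))) / 2"
    by metis
  have "\<forall>n. \<exists>t. 0 < t \<and> t < 1 \<and> u (x + (- hh n) *\<^sub>R e) = u x + grad u x \<bullet> ((- hh n) *\<^sub>R e)
      + (((- hh n) *\<^sub>R e) \<bullet> (hess u (x + t *\<^sub>R ((- hh n) *\<^sub>R e)) *v ((- hh n) *\<^sub>R e))) / 2"
    using taylor2[OF u_diff gu_diff] by blast
  then obtain t2 where t2: "\<And>n. 0 < t2 n \<and> t2 n < 1 \<and> u (x + (- hh n) *\<^sub>R e) = u x + grad u x \<bullet> ((- hh n) *\<^sub>R e)
      + (((- hh n) *\<^sub>R e) \<bullet> (hess u (x + t2 n *\<^sub>R ((- hh n) *\<^sub>R e)) *v ((- hh n) *\<^sub>R e))) / 2"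
    by metis
  define \<xi>1 where "\<xi>1 n = x + t1 n *\<^sub>R (hh n *\<^sub>R e)" for n
  define \<xi>2 where "\<xi>2 n = x + t2 n *\<^sub>R ((- hh n) *\<^sub>R e)" for n
  have n1: "norm (\<xi>1 n - x) \<le> hh n" for n
    using t1[of n] hh_pos[of n] by (simp add: \<xi>1_def e_def)
  have n2: "norm (\<xi>2 n - x) \<le> hh n" for n
    using t2[of n] hh_pos[of n] by (simp add: \<xi>2_def e_def)
  have ch: "isCont (hess u) x" using hu_cont by (simp add: continuous_on_eq_continuous_at)
  have l1: "(\<lambda>n. hess u (\<xi>1 n) $ i $ i) \<longlonglongrightarrow> hess u x $ i $ i"
    by (intro tendsto_vec_nth isCont_tendsto_compose[OF ch] xi_lim n1)
  have l2: "(\<lambda>n. hess u (\<xi>2 n) $ i $ i) \<longlonglongrightarrow> hess u x $ i $ i"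
    by (intro tendsto_vec_nth isCont_tendsto_compose[OF ch] xi_lim n2)
  define E where "E n = exp (- (hh n)\<^sup>2 / (4 * T))" for n
  have lE: "(\<lambda>n. (1 - E n) / (hh n)\<^sup>2) \<longlonglongrightarrow> inverse T / 4"
    unfolding E_def hh_def using lim_aux[OF Tpos] by simp
  have eq: "gfun i n x = (hess u (\<xi>1 n) $ i $ i + hess u (\<xi>2 n) $ i $ i) / 2 + 2 * u x * ((1 - E n) / (hh n)\<^sup>2)" for n
  proof -
    define h where "h = hh n"
    have h: "h > 0" using hh_pos by (simp add: h_def)
    have a1: "u (x + h *\<^sub>R e) = u x + h * grad u x $ i + h\<^sup>2 * hess u (\<xi>1 n) $ i $ i / 2"
      using t1[of n] unfolding \<xi>1_def h_def[symmetric] e_def quad_scaled by (simp add: inner_axis)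
    have a2: "u (x - h *\<^sub>R e) = u x - h * grad u x $ i + h\<^sup>2 * hess u (\<xi>2 n) $ i $ i / 2"
      using t2[of n] unfolding \<xi>2_def h_def[symmetric] e_def quad_scaled by (simp add: inner_axis)
    have "gfun i n x = (u (x + h *\<^sub>R e) + u (x - h *\<^sub>R e) - 2 * u x * E n) / h\<^sup>2"
      by (simp add: gfun_def h_def e_def E_def)
    also have "\<dots> = (h\<^sup>2 * ((hess u (\<xi>1 n) $ i $ i + hess u (\<xi>2 n) $ i $ i) / 2) + 2 * u x * (1 - E n)) / h\<^sup>2"
      by (simp add: a1 a2 algebra_simps)
    also have "\<dots> = (hess u (\<xi>1 n) $ i $ i + hess u (\<xi>2 n) $ i $ i) / 2 + 2 * u x * ((1 - E n) / h\<^sup>2)"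
      using h by (simp add: add_divide_distrib)
    finally show ?thesis by (simp add: h_def)
  qed
  have "(\<lambda>n. (hess u (\<xi>1 n) $ i $ i + hess u (\<xi>2 n) $ i $ i) / 2 + 2 * u x * ((1 - E n) / (hh n)\<^sup>2))
      \<longlonglongrightarrow> (hess u x $ i $ i + hess u x $ i $ i) / 2 + 2 * u x * (inverse T / 4)"
    using tendsto_add[OF tendsto_divide[OF tendsto_add[OF l1 l2] tendsto_const[of 2]] tendsto_mult[OF tendsto_const[of "2 * u x"] lE]]
    by simp
  moreover have "(hess u x $ i $ i + hess u x $ i $ i) / 2 + 2 * u x * (inverse T / 4) = S i x"
    by (simp add: S_def field_simps)
  ultimately show ?thesis unfolding eq by simp
qed

end

context vt
begin

lemma S_int: "(\<integral>\<^sup>+x. ennreal (S i x) \<partial>lborel) \<le> ennreal (1 / (2 * T))"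
proof -
  have gm: "(\<lambda>x. ennreal (gfun i n x)) \<in> borel_measurable lborel" for n
  proof -
    have [measurable]: "gfun i n \<in> borel_measurable lborel" using borel_measurable_integrable[OF g_int] .
    show ?thesis by measurable
  qed
  have fat: "(\<integral>\<^sup>+x. liminf (\<lambda>n. ennreal (gfun i n x)) \<partial>lborel) \<le> liminf (\<lambda>n. (\<integral>\<^sup>+x. ennreal (gfun i n x) \<partial>lborel))"
    by (rule nn_integral_liminf[OF gm])
  have pl: "liminf (\<lambda>n. ennreal (gfun i n x)) = ennreal (S i x)" for x
    by (rule lim_imp_Liminf[OF trivial_limit_sequentially tendsto_ennrealI[OF g_lim]])
  have bd: "(\<integral>\<^sup>+x. ennreal (gfun i n x) \<partial>lborel) \<le> ennreal (1 / (2 * T))" for n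
  proof -
    have "(\<integral>\<^sup>+x. ennreal (gfun i n x) \<partial>lborel) = ennreal (\<integral>x. gfun i n x \<partial>lborel)"
      by (rule nn_integral_eq_integral[OF g_int]) (simp add: g_nonneg)
    also have "\<dots> \<le> ennreal (1 / (2 * T))" by (intro ennreal_leI g_intval)
    finally show ?thesis .
  qed
  have "liminf (\<lambda>n. (\<integral>\<^sup>+x. ennreal (gfun i n x) \<partial>lborel)) \<le> ennreal (1 / (2 * T))"
    by (rule Liminf_le) (simp_all add: bd)
  then show ?thesis using fat pl by simp
qed

lemma S_meas: "(\<lambda>x. S i x) \<in> borel_measurable borel"
proof -
  have "continuous_on UNIV (\<lambda>x. S i x)"
    unfolding S_def using hu_cont u_cont Tpos by (intro continuous_intros) auto
  then show ?thesis by (rule borel_measurable_continuous_onI)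
qed

lemma hess_norm_nn: "(\<integral>\<^sup>+x. ennreal (norm (hess u x)) \<partial>lborel) \<le> ennreal ((real CARD('n))\<^sup>2 / T)"
proof -
  define N where "N = real CARD('n)"
  have Npos: "N > 0" by (simp add: N_def)
  have [measurable]: "(\<lambda>x. S i x) \<in> borel_measurable borel" for i by (rule S_meas)
  have pw: "ennreal (norm (hess u x)) \<le> ennreal N * (\<Sum>i\<in>UNIV. ennreal (S i x)) + ennreal (N\<^sup>2 / (2 * T)) * ennreal (u x)" for x
  proof -
    have "ennreal (norm (hess u x)) \<le> ennreal (N * (\<Sum>i\<in>UNIV. S i x) + N\<^sup>2 * (u x / (2 * T)))"
      using norm_hess_bound[of x] by (intro ennreal_leI) (simp add: N_def)
    also have "N * (\<Sum>i\<in>UNIV. S i x) + N\<^sup>2 * (u x / (2 * T)) = N * (\<Sum>i\<in>UNIV. S i x) + (N\<^sup>2 / (2 * T)) * u x"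
      by simp
    also have "ennreal \<dots> = ennreal (N * (\<Sum>i\<in>UNIV. S i x)) + ennreal ((N\<^sup>2 / (2 * T)) * u x)"
    proof (rule ennreal_plus)
      show "0 \<le> N * (\<Sum>i\<in>UNIV. S i x)" using Npos S_nonneg by (intro mult_nonneg_nonneg sum_nonneg) auto
      show "0 \<le> (N\<^sup>2 / (2 * T)) * u x" using Tpos u_pos[of x] by (intro mult_nonneg_nonneg) auto
    qed
    also have "ennreal (N * (\<Sum>i\<in>UNIV. S i x)) = ennreal N * ennreal (\<Sum>i\<in>UNIV. S i x)"
      using Npos S_nonneg by (intro ennreal_mult) (auto intro!: sum_nonneg)
    also have "ennreal (\<Sum>i\<in>UNIV. S i x) = (\<Sum>i\<in>UNIV. ennreal (S i x))"
      using S_nonneg by (simp add: sum_ennreal)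
    also have "ennreal ((N\<^sup>2 / (2 * T)) * u x) = ennreal (N\<^sup>2 / (2 * T)) * ennreal (u x)"
      using Tpos u_pos[of x] by (intro ennreal_mult) (auto intro: less_imp_le)
    finally show ?thesis .
  qed
  have "(\<integral>\<^sup>+x. ennreal (norm (hess u x)) \<partial>lborel)
      \<le> (\<integral>\<^sup>+x. ennreal N * (\<Sum>i\<in>UNIV. ennreal (S i x)) + ennreal (N\<^sup>2 / (2 * T)) * ennreal (u x) \<partial>lborel)"
    by (intro nn_integral_mono pw)
  also have "\<dots> = (\<integral>\<^sup>+x. ennreal N * (\<Sum>i\<in>UNIV. ennreal (S i x)) \<partial>lborel) + (\<integral>\<^sup>+x. ennreal (N\<^sup>2 / (2 * T)) * ennreal (u x) \<partial>lborel)"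
    by (rule nn_integral_add) measurable
  also have "(\<integral>\<^sup>+x. ennreal N * (\<Sum>i\<in>UNIV. ennreal (S i x)) \<partial>lborel) = ennreal N * (\<Sum>i\<in>UNIV. (\<integral>\<^sup>+x. ennreal (S i x) \<partial>lborel))"
    by (subst nn_integral_cmult) (measurable, subst nn_integral_sum, auto)
  also have "(\<integral>\<^sup>+x. ennreal (N\<^sup>2 / (2 * T)) * ennreal (u x) \<partial>lborel) = ennreal (N\<^sup>2 / (2 * T)) * 1"
    by (subst nn_integral_cmult) (measurable, simp add: u_nn1)
  also have "ennreal N * (\<Sum>i\<in>UNIV. (\<integral>\<^sup>+x. ennreal (S i x) \<partial>lborel)) \<le> ennreal N * (\<Sum>i\<in>(UNIV::'n set). ennreal (1 / (2 * T)))"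
    by (intro mult_left_mono sum_mono S_int) auto
  also have "ennreal N * (\<Sum>i\<in>(UNIV::'n set). ennreal (1 / (2 * T))) + ennreal (N\<^sup>2 / (2 * T)) * 1 = ennreal (N\<^sup>2 / T)"
  proof -
    have "(\<Sum>i\<in>(UNIV::'n set). ennreal (1 / (2 * T))) = ennreal (N * (1 / (2 * T)))"
    proof -
      have "(\<Sum>i\<in>(UNIV::'n set). ennreal (1 / (2 * T))) = ennreal (\<Sum>i\<in>(UNIV::'n set). 1 / (2 * T))"
        using Tpos by (intro sum_ennreal) auto
      then show ?thesis by (simp add: N_def)
    qed
    then have "ennreal N * (\<Sum>i\<in>(UNIV::'n set). ennreal (1 / (2 * T))) = ennreal N * ennreal (N * (1 / (2 * T)))"
      by (simp only:)
    also have "\<dots> = ennreal (N * (N * (1 / (2 * T))))"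
      using Npos Tpos by (intro ennreal_mult[symmetric]) auto
    finally have "ennreal N * (\<Sum>i\<in>(UNIV::'n set). ennreal (1 / (2 * T))) = ennreal (N * (N * (1 / (2 * T))))" .
    moreover have "ennreal (N * (N * (1 / (2 * T)))) + ennreal (N\<^sup>2 / (2 * T)) * 1 = ennreal (N * (N * (1 / (2 * T))) + N\<^sup>2 / (2 * T))"
      using Npos Tpos by (simp add: ennreal_plus)
    moreover have "N * (N * (1 / (2 * T))) + N\<^sup>2 / (2 * T) = N\<^sup>2 / T"
      using Tpos by (simp add: field_simps power2_eq_square)
    ultimately show ?thesis by simp
  qed
  finally show ?thesis by (simp add: N_def add_right_mono)
qed

lemma part3: "integrable lborel (\<lambda>x. norm (hess u x)) \<and> integral\<^sup>L lborel (\<lambda>x. norm (hess u x)) \<le> (real CARD('n))\<^sup>2 / T"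
proof -
  have m: "(\<lambda>x. norm (hess u x)) \<in> borel_measurable lborel"
  proof -
    have "continuous_on UNIV (\<lambda>x. norm (hess u x))" using hu_cont by (intro continuous_intros)
    then show ?thesis using borel_measurable_continuous_onI by simp
  qed
  have "(\<integral>\<^sup>+x. ennreal (norm (norm (hess u x))) \<partial>lborel) < \<infinity>"
    using hess_norm_nn by (simp add: order_le_less_trans)
  then have i: "integrable lborel (\<lambda>x. norm (hess u x))" by (rule integrableI_bounded[OF m])
  have "ennreal (integral\<^sup>L lborel (\<lambda>x. norm (hess u x))) = (\<integral>\<^sup>+x. ennreal (norm (hess u x)) \<partial>lborel)"
    by (rule nn_integral_eq_integral[OF i, symmetric]) simp
  also have "\<dots> \<le> ennreal ((real CARD('n))\<^sup>2 / T)" by (rule hess_norm_nn)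
  finally have "integral\<^sup>L lborel (\<lambda>x. norm (hess u x)) \<le> (real CARD('n))\<^sup>2 / T"
    using Tpos by (subst (asm) ennreal_le_iff) auto
  with i show ?thesis by simp
qed

end

theorem mainTheorem15:
  shows "(\<forall>(T::real) (u::real^'n \<Rightarrow> real). T > 0 \<and> u \<in> VT1plus T \<longrightarrow>
      ((u \<longlongrightarrow> 0) at_infinity \<and>
       (\<exists>z0. \<forall>x. 0 < u z0 * exp (- (norm (x - z0))\<^sup>2 / (4 * T)) \<and>
                 u z0 * exp (- (norm (x - z0))\<^sup>2 / (4 * T)) \<le> u x \<and>
                 u x \<le> u z0 \<and>
                 u z0 \<le> (4 * pi * T) powr (- real CARD('n) / 2)))
    \<and> (((\<lambda>x. norm (grad u x)) \<longlongrightarrow> 0) at_infinity \<and>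
       (\<forall>x. (norm (grad u x))\<^sup>2 \<le> 4 * pi / exp 1 * (4 * pi * T) powr (- (real CARD('n) + 2) / 2) * u x \<and>
            4 * pi / exp 1 * (4 * pi * T) powr (- (real CARD('n) + 2) / 2) * u x
              \<le> 4 * pi / exp 1 * (4 * pi * T) powr (- real CARD('n) - 1)))
    \<and> integrable lborel (\<lambda>x. norm (hess u x)))
   \<and> (\<exists>C1>0. \<forall>(T::real) (u::real^'n \<Rightarrow> real). T > 0 \<and> u \<in> VT1plus T \<longrightarrow>
        integral\<^sup>L lborel (\<lambda>x. norm (hess u x)) \<le> C1 / T)"
proof -
  have A: "((u \<longlongrightarrow> 0) at_infinity \<and>
       (\<exists>z0. \<forall>x. 0 < u z0 * exp (- (norm (x - z0))\<^sup>2 / (4 * T)) \<and>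
                 u z0 * exp (- (norm (x - z0))\<^sup>2 / (4 * T)) \<le> u x \<and>
                 u x \<le> u z0 \<and>
                 u z0 \<le> (4 * pi * T) powr (- real CARD('n) / 2)))
    \<and> (((\<lambda>x. norm (grad u x)) \<longlongrightarrow> 0) at_infinity \<and>
       (\<forall>x. (norm (grad u x))\<^sup>2 \<le> 4 * pi / exp 1 * (4 * pi * T) powr (- (real CARD('n) + 2) / 2) * u x \<and>
            4 * pi / exp 1 * (4 * pi * T) powr (- (real CARD('n) + 2) / 2) * u x
              \<le> 4 * pi / exp 1 * (4 * pi * T) powr (- real CARD('n) - 1)))
    \<and> integrable lborel (\<lambda>x. norm (hess u x))"
    if h: "T > 0 \<and> u \<in> VT1plus T" for T and u :: "real^'n \<Rightarrow> real"
  proof -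
    interpret vt T u using h by unfold_locales auto
    show ?thesis using u_tendsto part1 grad_tendsto grad_bound grad_bound2 part3 by blast
  qed
  have B: "integral\<^sup>L lborel (\<lambda>x. norm (hess u x)) \<le> (real CARD('n))\<^sup>2 / T"
    if h: "T > 0 \<and> u \<in> VT1plus T" for T and u :: "real^'n \<Rightarrow> real"
  proof -
    interpret vt T u using h by unfold_locales auto
    show ?thesis using part3 by blast
  qed
  have "(real CARD('n))\<^sup>2 > 0" by simp
  then show ?thesis using A B by blast
qed

end
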